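(* Let $\Delta\subset\mathbb{S}^2$ be a prime flag complex that is not special. Let $\alpha_1$ and $\alpha_2$ be two distinct induced 4-cycles of $\Delta$ with non-empty intersection. Then $\alpha_1\cap\alpha_2$ is a vertex or an edge of $\Delta$.
   Context: A flag complex is a simplicial complex in which every complete subgraph of the 1-skeleton spans a simplex. For $\Delta\subset\mathbb{S}^2$, an induced 4-cycle $\sigma$ strongly separates $\Delta$ if $\Delta$ meets both components of $\mathbb{S}^2-\sigma$. $\Delta$ is prime if (1) it is connected with no separating vertex and no separating edge; (2) it is not a 4-cycle but contains an induced 4-cycle; (3) it has no strongly separating induced 4-cycle. $\Delta$ is special if it is the suspension (join with two non-adjacent vertices) of a graph with 3 vertices that is not a triangle. *)

theory Defs
  imports "HOL-Analysis.Analysis"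
begin

definition simplicial_complex :: "'v set set \<Rightarrow> bool" where
  "simplicial_complex K \<longleftrightarrow> finite K \<and> (\<forall>s\<in>K. finite s \<and> s \<noteq> {}) \<and>
     (\<forall>s\<in>K. \<forall>t. t \<subseteq> s \<and> t \<noteq> {} \<longrightarrow> t \<in> K)"

definition verts :: "'v set set \<Rightarrow> 'v set" where
  "verts K = \<Union>K"

definition adj :: "'v set set \<Rightarrow> 'v \<Rightarrow> 'v \<Rightarrow> bool" where
  "adj K u w \<longleftrightarrow> u \<noteq> w \<and> {u, w} \<in> K"

definition flag_complex :: "'v set set \<Rightarrow> bool" where
  "flag_complex K \<longleftrightarrow> simplicial_complex K \<and>
     (\<forall>S. finite S \<and> S \<noteq> {} \<and> S \<subseteq> verts K \<and> (\<forall>u\<in>S. \<forall>w\<in>S. u \<noteq> w \<longrightarrow> adj K u w)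
          \<longrightarrow> S \<in> K)"

definition full_sub :: "'v set set \<Rightarrow> 'v set \<Rightarrow> 'v set set" where
  "full_sub K S = {s \<in> K. s \<subseteq> S}"

text \<open>Geometric realization (barycentric coordinates, in the product topology).\<close>
definition geom :: "'v set set \<Rightarrow> ('v \<Rightarrow> real) set" where
  "geom K = {x. (\<forall>v. 0 \<le> x v) \<and> {v. x v \<noteq> 0} \<in> K \<and> sum x {v. x v \<noteq> 0} = 1}"

text \<open>An embedding of the complex into the 2-sphere; its image is \<open>\<Delta>\<close>.\<close>
definition sphere_embedding :: "'v set set \<Rightarrow> (('v \<Rightarrow> real) \<Rightarrow> real^3) \<Rightarrow> bool" where
  "sphere_embedding K h \<longleftrightarrow> continuous_on (geom K) h \<and> inj_on h (geom K) \<and>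
     h ` geom K \<subseteq> sphere 0 1"

definition induced_4cycle :: "'v set set \<Rightarrow> 'v set \<Rightarrow> bool" where
  "induced_4cycle K S \<longleftrightarrow> S \<subseteq> verts K \<and> (\<exists>a b c d. S = {a, b, c, d} \<and>
     a \<noteq> b \<and> a \<noteq> c \<and> a \<noteq> d \<and> b \<noteq> c \<and> b \<noteq> d \<and> c \<noteq> d \<and>
     adj K a b \<and> adj K b c \<and> adj K c d \<and> adj K d a \<and> \<not> adj K a c \<and> \<not> adj K b d)"

text \<open>\<open>\<sigma>\<close> strongly separates \<open>\<Delta>\<close>: \<open>\<Delta>\<close> meets both (all) components of \<open>S\<^sup>2 - \<sigma>\<close>.\<close>
definition strongly_separates :: "'v set set \<Rightarrow> (('v \<Rightarrow> real) \<Rightarrow> real^3) \<Rightarrow> 'v set \<Rightarrow> bool" where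
  "strongly_separates K h S \<longleftrightarrow> induced_4cycle K S \<and>
     (\<forall>C\<in>components (sphere 0 1 - h ` geom (full_sub K S)). h ` geom K \<inter> C \<noteq> {})"

definition vertex_point :: "'v \<Rightarrow> ('v \<Rightarrow> real)" where
  "vertex_point v = (\<lambda>u. if u = v then 1 else 0)"

definition prime_complex :: "'v set set \<Rightarrow> (('v \<Rightarrow> real) \<Rightarrow> real^3) \<Rightarrow> bool" where
  "prime_complex K h \<longleftrightarrow>
     connected (h ` geom K) \<and>
     (\<forall>v\<in>verts K. connected (h ` geom K - {h (vertex_point v)})) \<and>
     (\<forall>u w. adj K u w \<longrightarrow> connected (h ` geom K - h ` geom (full_sub K {u, w}))) \<and>
     \<not> induced_4cycle K (verts K) \<and>
     (\<exists>S. induced_4cycle K S) \<and>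
     (\<forall>S. \<not> strongly_separates K h S)"

text \<open>Special: suspension of a graph on 3 vertices which is not a triangle.\<close>
definition special_complex :: "'v set set \<Rightarrow> bool" where
  "special_complex K \<longleftrightarrow> (\<exists>n s A. n \<noteq> s \<and> n \<notin> A \<and> s \<notin> A \<and> card A = 3 \<and>
     verts K = A \<union> {n, s} \<and> \<not> adj K n s \<and> (\<forall>x\<in>A. adj K n x \<and> adj K s x) \<and>
     \<not> (\<forall>x\<in>A. \<forall>y\<in>A. x \<noteq> y \<longrightarrow> adj K x y))"

end

theory Submission
  imports Defs
begin
definition sp :: "'v \<Rightarrow> 'v \<Rightarrow> real \<Rightarrow> ('v \<Rightarrow> real)" where
  "sp u w t = (\<lambda>v. (1 - t) * vertex_point u v + t * vertex_point w v)"

definition sg :: "'v \<Rightarrow> 'v \<Rightarrow> ('v \<Rightarrow> real) set" where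
  "sg u w = {x. (\<forall>v. 0 \<le> x v) \<and> (\<forall>v. v \<noteq> u \<and> v \<noteq> w \<longrightarrow> x v = 0) \<and> x u + x w = 1}"

lemma sg_sym: "sg u w = sg w u"
  unfolding sg_def by (auto simp: add.commute)

lemma path_sp: "path (sp u w)"
  unfolding path_def sp_def
  by (intro continuous_on_coordinatewise_then_product continuous_intros)

lemma arc_sp: assumes "u \<noteq> w" shows "arc (sp u w)"
proof -
  have "inj_on (sp u w) {0..1}"
  proof (rule inj_onI)
    fix s t assume "sp u w s = sp u w t"
    then have "sp u w s w = sp u w t w" by simp
    then show "s = t" using assms by (simp add: sp_def vertex_point_def)
  qed
  then show ?thesis by (simp add: arc_def path_sp)
qed

lemma sp_start [simp]: "pathstart (sp u w) = vertex_point u"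
  by (simp add: pathstart_def sp_def vertex_point_def)

lemma sp_finish [simp]: "pathfinish (sp u w) = vertex_point w"
  by (simp add: pathfinish_def sp_def vertex_point_def)

lemma path_image_sp: assumes "u \<noteq> w" shows "path_image (sp u w) = sg u w"
proof
  show "path_image (sp u w) \<subseteq> sg u w"
    using assms by (auto simp: path_image_def sp_def sg_def vertex_point_def)
next
  show "sg u w \<subseteq> path_image (sp u w)"
  proof
    fix x assume x: "x \<in> sg u w"
    have "x = sp u w (x w)"
    proof
      fix v show "x v = sp u w (x w) v"
        using x assms by (cases "v = u"; cases "v = w") (auto simp: sp_def sg_def vertex_point_def)
    qed
    moreover have "0 \<le> x u" "0 \<le> x w" "x u + x w = 1" using x by (auto simp: sg_def)
    then have "x w \<in> {0..1}" by simp
    ultimately show "x \<in> path_image (sp u w)" unfolding path_image_def by blast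
  qed
qed

lemma vp_in_sg: "u \<noteq> w \<Longrightarrow> vertex_point u \<in> sg u w" "u \<noteq> w \<Longrightarrow> vertex_point w \<in> sg u w"
  by (auto simp: sg_def vertex_point_def)

lemma vp_sg_iff: assumes "vertex_point z \<in> sg u w" shows "z = u \<or> z = w"
proof (rule ccontr)
  assume "\<not> (z = u \<or> z = w)"
  then have "vertex_point z z = 0" using assms by (auto simp: sg_def)
  then show False by (simp add: vertex_point_def)
qed

lemma sg_Int:
  assumes "u \<noteq> w" "x \<in> sg u w" "x \<in> sg u' w'" "{u, w} \<noteq> {u', w'}"
  shows "\<exists>z. x = vertex_point z \<and> z \<in> {u, w} \<and> z \<in> {u', w'}"
proof -
  have z1: "\<And>v. v \<noteq> u \<Longrightarrow> v \<noteq> w \<Longrightarrow> x v = 0" and s1: "x u + x w = 1"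
    using assms(2) unfolding sg_def by auto
  have z2: "\<And>v. v \<noteq> u' \<Longrightarrow> v \<noteq> w' \<Longrightarrow> x v = 0"
    using assms(3) unfolding sg_def by auto
  have "u \<notin> {u', w'} \<or> w \<notin> {u', w'}" using assms(1,4) by auto
  then show ?thesis
  proof
    assume u: "u \<notin> {u', w'}"
    then have xu: "x u = 0" using z2 by simp
    then have xw: "x w = 1" using s1 by simp
    then have w: "w \<in> {u', w'}" using z2 by force
    have "x = vertex_point w"
    proof
      fix v show "x v = vertex_point w v"
        unfolding vertex_point_def using xu xw z1[of v] assms(1) by (cases "v = u"; cases "v = w") simp_all
    qed
    then show ?thesis using w by blast
  next
    assume u: "w \<notin> {u', w'}"
    then have xu: "x w = 0" using z2 by simp
    then have xw: "x u = 1" using s1 by simp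
    then have w: "u \<in> {u', w'}" using z2 by force
    have "x = vertex_point u"
    proof
      fix v show "x v = vertex_point u v"
        unfolding vertex_point_def using xu xw z1[of v] assms(1) by (cases "v = u"; cases "v = w") simp_all
    qed
    then show ?thesis using w by blast
  qed
qed

lemma supp_sum:
  assumes "finite A" "{v. x v \<noteq> 0} \<subseteq> A"
  shows "sum x {v. x v \<noteq> (0::real)} = sum x A"
  using assms by (intro sum.mono_neutral_left) auto

lemma sc_closed: "simplicial_complex K \<Longrightarrow> s \<in> K \<Longrightarrow> t \<subseteq> s \<Longrightarrow> t \<noteq> {} \<Longrightarrow> t \<in> K"
  unfolding simplicial_complex_def by blast

lemma sg_geom:
  assumes "simplicial_complex K" "{u, w} \<in> K" "u \<noteq> w"
  shows "sg u w \<subseteq> geom K"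
proof
  fix x assume x: "x \<in> sg u w"
  have sub: "{v. x v \<noteq> 0} \<subseteq> {u, w}" using x by (auto simp: sg_def)
  have s: "sum x {v. x v \<noteq> 0} = 1"
    using supp_sum[OF _ sub] x assms(3) by (simp add: sg_def)
  have "{v. x v \<noteq> 0} \<noteq> {}"
  proof
    assume "{v. x v \<noteq> 0} = {}" with s show False by simp
  qed
  then have "{v. x v \<noteq> 0} \<in> K" using sc_closed[OF assms(1,2) sub] by blast
  then show "x \<in> geom K" using x s by (auto simp: geom_def sg_def)
qed

lemma vp_geom:
  assumes "simplicial_complex K" "u \<in> verts K"
  shows "vertex_point u \<in> geom K"
proof -
  obtain s where "s \<in> K" "u \<in> s" using assms(2) by (auto simp: verts_def)
  then have "{u} \<in> K" using sc_closed[OF assms(1), of s "{u}"] by auto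
  moreover have "{v. vertex_point u v \<noteq> 0} = {u}" by (auto simp: vertex_point_def)
  ultimately show ?thesis by (auto simp: geom_def vertex_point_def)
qed

lemma adj_sym: "adj K u w \<longleftrightarrow> adj K w u"
  unfolding adj_def by (auto simp: insert_commute)

lemma adj_verts: "adj K u w \<Longrightarrow> u \<in> verts K \<and> w \<in> verts K"
  unfolding adj_def verts_def by auto

lemma sg_Int_sub:
  assumes "u \<noteq> w" "{u, w} \<noteq> {u', w'}"
  shows "sg u w \<inter> sg u' w' \<subseteq> vertex_point ` ({u, w} \<inter> {u', w'})"
  using sg_Int[OF assms(1) _ _ assms(2)] by blast

definition cyc :: "'v \<Rightarrow> 'v \<Rightarrow> 'v \<Rightarrow> 'v \<Rightarrow> ('v \<Rightarrow> real) set" where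
  "cyc a p c r = sg a p \<union> sg p c \<union> sg c r \<union> sg r a"

definition lp :: "'v \<Rightarrow> 'v \<Rightarrow> 'v \<Rightarrow> 'v \<Rightarrow> real \<Rightarrow> ('v \<Rightarrow> real)" where
  "lp a p c r = sp a p +++ (sp p c +++ (sp c r +++ sp r a))"

lemma lp_props:
  assumes "a \<noteq> p" "a \<noteq> c" "a \<noteq> r" "p \<noteq> c" "p \<noteq> r" "c \<noteq> r"
  shows "simple_path (lp a p c r)" "path_image (lp a p c r) = cyc a p c r"
    "pathfinish (lp a p c r) = pathstart (lp a p c r)"
proof -
  have i1: "path_image (sp c r +++ sp r a) = sg c r \<union> sg r a"
    using assms by (simp add: path_image_join path_image_sp)
  have a1: "arc (sp c r +++ sp r a)"
  proof (rule arc_join)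
    show "path_image (sp c r) \<inter> path_image (sp r a) \<subseteq> {pathstart (sp r a)}"
      using assms sg_Int_sub[of c r r a] by (auto simp: path_image_sp)
  qed (use assms in \<open>auto intro!: arc_sp\<close>)
  have i2: "path_image (sp p c +++ (sp c r +++ sp r a)) = sg p c \<union> sg c r \<union> sg r a"
    using assms i1 by (simp add: path_image_join path_image_sp Un_assoc)
  have a2: "arc (sp p c +++ (sp c r +++ sp r a))"
  proof (rule arc_join)
    have "sg p c \<inter> sg c r \<subseteq> {vertex_point c}" using assms sg_Int_sub[of p c c r] by auto
    moreover have "sg p c \<inter> sg r a \<subseteq> {}" using assms sg_Int_sub[of p c r a] by auto
    ultimately show "path_image (sp p c) \<inter> path_image (sp c r +++ sp r a) \<subseteq> {pathstart (sp c r +++ sp r a)}"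
      using assms i1 by (auto simp: path_image_sp)
  qed (use assms a1 in \<open>auto intro!: arc_sp\<close>)
  show "simple_path (lp a p c r)" unfolding lp_def
  proof (rule simple_path_join_loop)
    have "sg a p \<inter> sg p c \<subseteq> {vertex_point p}" using assms sg_Int_sub[of a p p c] by auto
    moreover have "sg a p \<inter> sg c r \<subseteq> {}" using assms sg_Int_sub[of a p c r] by auto
    moreover have "sg a p \<inter> sg r a \<subseteq> {vertex_point a}" using assms sg_Int_sub[of a p r a] by auto
    ultimately show "path_image (sp a p) \<inter> path_image (sp p c +++ (sp c r +++ sp r a))
       \<subseteq> {pathstart (sp a p), pathstart (sp p c +++ (sp c r +++ sp r a))}"
      using assms i2 by (auto simp: path_image_sp)
  qed (use assms a2 in \<open>auto intro!: arc_sp\<close>)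
  show "path_image (lp a p c r) = cyc a p c r"
    using assms i2 by (simp add: lp_def cyc_def path_image_join path_image_sp Un_assoc)
  show "pathfinish (lp a p c r) = pathstart (lp a p c r)"
    by (simp add: lp_def)
qed

lemma compact_cyc:
  assumes "a \<noteq> p" "a \<noteq> c" "a \<noteq> r" "p \<noteq> c" "p \<noteq> r" "c \<noteq> r"
  shows "compact (cyc a p c r)"
  using lp_props[OF assms] by (metis compact_path_image simple_path_imp_path)

lemma cyc_geom:
  assumes "simplicial_complex K" "adj K a p" "adj K p c" "adj K c r" "adj K r a"
  shows "cyc a p c r \<subseteq> geom K"
  using assms sg_geom[of K] unfolding cyc_def adj_def by blast

lemma geom_sg:
  assumes "x \<in> geom K" "{v. x v \<noteq> 0} \<subseteq> {u, w}" "u \<noteq> w"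
  shows "x \<in> sg u w"
proof -
  have "sum x {v. x v \<noteq> 0} = x u + x w" using supp_sum[OF _ assms(2)] assms(3) by simp
  then show ?thesis using assms by (auto simp: geom_def sg_def)
qed

lemma geom_full_sub: "x \<in> geom (full_sub K S) \<longleftrightarrow> x \<in> geom K \<and> {v. x v \<noteq> 0} \<subseteq> S"
  by (auto simp: geom_def full_sub_def)

lemma geom_cyc:
  assumes "simplicial_complex K" "adj K a p" "adj K p c" "adj K c r" "adj K r a"
    "\<not> adj K a c" "\<not> adj K p r" "a \<noteq> c" "p \<noteq> r"
  shows "geom (full_sub K {a, p, c, r}) = cyc a p c r"
proof
  show "cyc a p c r \<subseteq> geom (full_sub K {a, p, c, r})"
  proof
    fix x assume x: "x \<in> cyc a p c r"
    then have "x \<in> geom K" using cyc_geom[OF assms(1-5)] by blast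
    moreover have "{v. x v \<noteq> 0} \<subseteq> {a, p, c, r}" using x by (auto simp: cyc_def sg_def)
    ultimately show "x \<in> geom (full_sub K {a, p, c, r})" by (simp add: geom_full_sub)
  qed
next
  show "geom (full_sub K {a, p, c, r}) \<subseteq> cyc a p c r"
  proof
    fix x assume x: "x \<in> geom (full_sub K {a, p, c, r})"
    define s where "s = {v. x v \<noteq> 0}"
    have xg: "x \<in> geom K" and ss: "s \<subseteq> {a, p, c, r}" using x by (auto simp: geom_full_sub s_def)
    have sK: "s \<in> K" using xg by (simp add: geom_def s_def)
    have "\<not> {a, c} \<subseteq> s"
    proof
      assume "{a, c} \<subseteq> s"
      then have "{a, c} \<in> K" using sc_closed[OF assms(1) sK] by blast
      then show False using assms(6,8) by (simp add: adj_def)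
    qed
    moreover have "\<not> {p, r} \<subseteq> s"
    proof
      assume "{p, r} \<subseteq> s"
      then have "{p, r} \<in> K" using sc_closed[OF assms(1) sK] by blast
      then show False using assms(7,9) by (simp add: adj_def)
    qed
    ultimately have "s \<subseteq> {a, p} \<or> s \<subseteq> {p, c} \<or> s \<subseteq> {c, r} \<or> s \<subseteq> {r, a}"
      using ss by blast
    moreover have "a \<noteq> p" "p \<noteq> c" "c \<noteq> r" "r \<noteq> a" using assms by (auto simp: adj_def)
    ultimately show "x \<in> cyc a p c r"
      using geom_sg[OF xg] unfolding s_def cyc_def by blast
  qed
qed

definition tri :: "'v \<Rightarrow> 'v \<Rightarrow> 'v \<Rightarrow> ('v \<Rightarrow> real) set" where
  "tri u w y = {x. (\<forall>v. 0 \<le> x v) \<and> (\<forall>v. v \<noteq> u \<and> v \<noteq> w \<and> v \<noteq> y \<longrightarrow> x v = 0) \<and> x u + x w + x y = 1}"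

lemma tri_geom:
  assumes "simplicial_complex K" "{u, w, y} \<in> K" "u \<noteq> w" "u \<noteq> y" "w \<noteq> y"
  shows "tri u w y \<subseteq> geom K"
proof
  fix x assume x: "x \<in> tri u w y"
  have sub: "{v. x v \<noteq> 0} \<subseteq> {u, w, y}" using x by (auto simp: tri_def)
  have s: "sum x {v. x v \<noteq> 0} = 1"
    using supp_sum[OF _ sub] x assms(3-5) by (simp add: tri_def add.assoc)
  have "{v. x v \<noteq> 0} \<noteq> {}"
  proof
    assume "{v. x v \<noteq> 0} = {}" with s show False by simp
  qed
  then have "{v. x v \<noteq> 0} \<in> K" using sc_closed[OF assms(1,2) sub] by blast
  then show "x \<in> geom K" using x s by (auto simp: geom_def tri_def)
qed

lemma sg_tri: assumes "u \<noteq> w" "u \<noteq> y" "w \<noteq> y"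
  shows "sg u w \<subseteq> tri u w y" "sg w y \<subseteq> tri u w y" "sg u y \<subseteq> tri u w y"
  using assms unfolding sg_def tri_def by auto

lemma tri_Int:
  assumes "a \<noteq> c" "a \<noteq> p" "a \<noteq> r" "c \<noteq> p" "c \<noteq> r"
  shows "tri a p r \<inter> tri c p r = sg p r"
proof
  show "sg p r \<subseteq> tri a p r \<inter> tri c p r" using assms unfolding sg_def tri_def by auto
  show "tri a p r \<inter> tri c p r \<subseteq> sg p r"
  proof
    fix x assume x: "x \<in> tri a p r \<inter> tri c p r"
    then have "x a = 0" "x c = 0" using assms unfolding tri_def by auto
    then show "x \<in> sg p r" using x unfolding tri_def sg_def by auto
  qed
qed

lemma vp_tri: assumes "vertex_point z \<in> tri u w y" shows "z = u \<or> z = w \<or> z = y"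
proof (rule ccontr)
  assume "\<not> (z = u \<or> z = w \<or> z = y)"
  then have "vertex_point z z = 0" using assms by (auto simp: tri_def)
  then show False by (simp add: vertex_point_def)
qed

definition trimap :: "'v \<Rightarrow> 'v \<Rightarrow> 'v \<Rightarrow> complex \<Rightarrow> ('v \<Rightarrow> real)" where
  "trimap u w y z = (\<lambda>v. (1 - Re z - Im z) * vertex_point u v + Re z * vertex_point w v + Im z * vertex_point y v)"

lemma tri_homeo:
  assumes "u \<noteq> w" "u \<noteq> y" "w \<noteq> y"
  shows "continuous_on (convex hull {0, 1, \<i>}) (trimap u w y)"
    "inj_on (trimap u w y) (convex hull {0, 1, \<i>})"
    "trimap u w y ` (convex hull {0, 1, \<i>}) = tri u w y" "compact (tri u w y)"
proof -
  let ?H = "convex hull {0, 1, \<i>::complex}"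
  have cH: "compact ?H" by (simp add: compact_convex_hull)
  have cont: "continuous_on ?H (trimap u w y)"
    unfolding trimap_def by (intro continuous_on_coordinatewise_then_product continuous_intros)
  have inj: "inj_on (trimap u w y) ?H"
  proof (rule inj_onI)
    fix z1 z2 assume "trimap u w y z1 = trimap u w y z2"
    then have "trimap u w y z1 w = trimap u w y z2 w" "trimap u w y z1 y = trimap u w y z2 y" by auto
    then have "Re z1 = Re z2" "Im z1 = Im z2" using assms by (auto simp: trimap_def vertex_point_def)
    then show "z1 = z2" by (simp add: complex_eq_iff)
  qed
  have img: "trimap u w y ` ?H = tri u w y"
  proof
    show "trimap u w y ` ?H \<subseteq> tri u w y"
    proof
      fix x assume "x \<in> trimap u w y ` ?H"
      then obtain s t q where st: "0 \<le> s" "0 \<le> t" "0 \<le> q" "s + t + q = 1"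
        and x: "x = trimap u w y (s *\<^sub>R 0 + t *\<^sub>R 1 + q *\<^sub>R \<i>)"
        unfolding convex_hull_3 by blast
      have "Re (s *\<^sub>R 0 + t *\<^sub>R 1 + q *\<^sub>R \<i>) = t" "Im (s *\<^sub>R 0 + t *\<^sub>R 1 + q *\<^sub>R \<i>) = q" by simp_all
      then show "x \<in> tri u w y" using st assms unfolding x trimap_def tri_def vertex_point_def by auto
    qed
    show "tri u w y \<subseteq> trimap u w y ` ?H"
    proof
      fix x assume x: "x \<in> tri u w y"
      define z where "z = x u *\<^sub>R (0::complex) + x w *\<^sub>R 1 + x y *\<^sub>R \<i>"
      have "z \<in> ?H" unfolding convex_hull_3 z_def using x by (auto simp: tri_def)
      moreover have "x = trimap u w y z"
      proof
        fix v show "x v = trimap u w y z v"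
          using x assms unfolding tri_def trimap_def z_def vertex_point_def
          by (cases "v = u"; cases "v = w"; cases "v = y") auto
      qed
      ultimately show "x \<in> trimap u w y ` ?H" by blast
    qed
  qed
  show "continuous_on ?H (trimap u w y)" "inj_on (trimap u w y) ?H" "trimap u w y ` ?H = tri u w y"
    using cont inj img by auto
  show "compact (tri u w y)" using img cH cont compact_continuous_image by metis
qed

lemma flag3:
  assumes "flag_complex K" "adj K x y" "adj K y z" "adj K x z"
  shows "{x, y, z} \<in> K"
proof -
  have "{x, y, z} \<subseteq> verts K" using assms(2-4) adj_verts by fastforce
  moreover have "\<forall>u\<in>{x, y, z}. \<forall>w\<in>{x, y, z}. u \<noteq> w \<longrightarrow> adj K u w"
    using assms(2-4) unfolding adj_def by (auto simp: insert_commute)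
  moreover have fl: "\<And>S. finite S \<Longrightarrow> S \<noteq> {} \<Longrightarrow> S \<subseteq> verts K \<Longrightarrow>
      (\<forall>u\<in>S. \<forall>w\<in>S. u \<noteq> w \<longrightarrow> adj K u w) \<Longrightarrow> S \<in> K"
    using assms(1) unfolding flag_complex_def by simp
  ultimately show ?thesis by simp
qed

lemma connected_in_one:
  assumes "connected C" "C \<subseteq> A \<union> B" "open A" "open B" "A \<inter> B = {}" "y \<in> C" "y \<in> A"
  shows "C \<subseteq> A"
proof -
  have "A \<inter> B \<inter> C = {}" using assms(5) by blast
  then have "A \<inter> C = {} \<or> B \<inter> C = {}" using connectedD[OF assms(1,3,4)] assms(2) by blast
  then show ?thesis using assms(2,6,7) by blast
qed

locale pl =
  fixes K :: "'v set set" and h :: "('v \<Rightarrow> real) \<Rightarrow> real^3" and P :: "real^3"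
    and \<phi> :: "real^3 \<Rightarrow> complex" and \<psi> :: "complex \<Rightarrow> real^3"
  assumes flag: "flag_complex K" and emb: "sphere_embedding K h"
    and nss: "\<And>S. \<not> strongly_separates K h S"
    and P: "P \<in> sphere 0 1" "P \<notin> h ` geom K"
    and hom: "homeomorphism (sphere 0 1 - {P}) UNIV \<phi> \<psi>"
begin

definition F where "F = \<phi> \<circ> h"
definition D where "D = F ` geom K"

lemma sc: "simplicial_complex K" using flag unfolding flag_complex_def by simp

lemma hsub: "h ` geom K \<subseteq> sphere 0 1 - {P}"
  using emb P unfolding sphere_embedding_def by auto

lemma phi_cont: "continuous_on (sphere 0 1 - {P}) \<phi>"
  using hom unfolding homeomorphism_def by (elim conjE)
lemma psi_cont: "continuous_on UNIV \<psi>"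
  using hom unfolding homeomorphism_def by (elim conjE)
lemma psi_phi: "x \<in> sphere 0 1 - {P} \<Longrightarrow> \<psi> (\<phi> x) = x"
  using homeomorphism_apply1[OF hom] by simp
lemma phi_psi: "\<phi> (\<psi> z) = z"
  using homeomorphism_apply2[OF hom] by simp
lemma psi_in: "\<psi> z \<in> sphere 0 1 - {P}"
  using homeomorphism_image2[OF hom] by blast

lemma F_cont: "continuous_on (geom K) F"
proof -
  have "continuous_on (geom K) h" using emb unfolding sphere_embedding_def by simp
  moreover have "continuous_on (h ` geom K) \<phi>" using continuous_on_subset[OF phi_cont hsub] .
  ultimately show ?thesis unfolding F_def by (rule continuous_on_compose)
qed

lemma F_inj: "inj_on F (geom K)"
proof -
  have "inj_on h (geom K)" using emb unfolding sphere_embedding_def by simp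
  moreover have "inj_on \<phi> (h ` geom K)"
  proof (rule inj_onI)
    fix x y assume "x \<in> h ` geom K" "y \<in> h ` geom K" "\<phi> x = \<phi> y"
    then have "x \<in> sphere 0 1 - {P}" "y \<in> sphere 0 1 - {P}" using hsub by auto
    then show "x = y" using psi_phi \<open>\<phi> x = \<phi> y\<close> by metis
  qed
  ultimately show ?thesis unfolding F_def by (rule comp_inj_on)
qed

lemma F_eq: "x \<in> geom K \<Longrightarrow> y \<in> geom K \<Longrightarrow> F x = F y \<longleftrightarrow> x = y"
  using inj_on_eq_iff[OF F_inj] by simp

lemma F_notin: "x \<in> geom K \<Longrightarrow> A \<subseteq> geom K \<Longrightarrow> x \<notin> A \<Longrightarrow> F x \<notin> F ` A"
  using F_eq by blast

lemma D_vp: "u \<in> verts K \<Longrightarrow> F (vertex_point u) \<in> D"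
  unfolding D_def using vp_geom[OF sc] by blast

lemma jordan_cyc:
  assumes "adj K a p" "adj K p c" "adj K c r" "adj K r a" "a \<noteq> c" "p \<noteq> r"
  defines "J \<equiv> F ` cyc a p c r"
  shows "inside J \<noteq> {} \<and> open (inside J) \<and> connected (inside J) \<and>
         outside J \<noteq> {} \<and> open (outside J) \<and> connected (outside J) \<and>
         inside J \<inter> outside J = {} \<and> inside J \<union> outside J = - J \<and>
         frontier (inside J) = J \<and> frontier (outside J) = J"
proof -
  have d: "a \<noteq> p" "a \<noteq> c" "a \<noteq> r" "p \<noteq> c" "p \<noteq> r" "c \<noteq> r"
    using assms(1-6) unfolding adj_def by auto
  have cg: "cyc a p c r \<subseteq> geom K" using cyc_geom[OF sc assms(1-4)] .
  note L = lp_props[OF d]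
  have sp: "simple_path (F \<circ> lp a p c r)"
    using L(1,2) cg F_cont F_inj
    by (intro simple_path_continuous_image) (auto intro: continuous_on_subset inj_on_subset)
  have pi: "path_image (F \<circ> lp a p c r) = J"
    using L(2) by (simp add: path_image_compose J_def)
  have lo: "pathfinish (F \<circ> lp a p c r) = pathstart (F \<circ> lp a p c r)"
    using L(3) by (simp add: pathfinish_compose pathstart_compose)
  show ?thesis using Jordan_inside_outside[OF sp lo] unfolding pi by blast
qed

lemma compact_Fcyc:
  assumes "adj K a p" "adj K p c" "adj K c r" "adj K r a" "a \<noteq> c" "p \<noteq> r"
  shows "compact (F ` cyc a p c r)"
proof -
  have d: "a \<noteq> p" "a \<noteq> c" "a \<noteq> r" "p \<noteq> c" "p \<noteq> r" "c \<noteq> r"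
    using assms(1-6) unfolding adj_def by auto
  show ?thesis using compact_cyc[OF d] cyc_geom[OF sc assms(1-4)] F_cont
    by (meson compact_continuous_image continuous_on_subset)
qed

end

lemma cyc_Int:
  assumes "a \<noteq> p" "a \<noteq> q" "a \<noteq> c" "a \<noteq> r" "p \<noteq> q" "p \<noteq> c" "p \<noteq> r" "q \<noteq> c" "q \<noteq> r" "c \<noteq> r"
  shows "cyc a p c r \<inter> cyc a q c r = sg c r \<union> sg r a"
proof
  show "sg c r \<union> sg r a \<subseteq> cyc a p c r \<inter> cyc a q c r" unfolding cyc_def by blast
  have i1: "sg a p \<inter> sg a q \<subseteq> {vertex_point a}" using sg_Int_sub[of a p a q] assms by (auto simp: doubleton_eq_iff)
  have i2: "sg a p \<inter> sg q c \<subseteq> {}" using sg_Int_sub[of a p q c] assms by (auto simp: doubleton_eq_iff)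
  have i3: "sg p c \<inter> sg a q \<subseteq> {}" using sg_Int_sub[of p c a q] assms by (auto simp: doubleton_eq_iff)
  have i4: "sg p c \<inter> sg q c \<subseteq> {vertex_point c}" using sg_Int_sub[of p c q c] assms by (auto simp: doubleton_eq_iff)
  have va: "vertex_point a \<in> sg r a" "vertex_point c \<in> sg c r" using vp_in_sg assms by metis+
  show "cyc a p c r \<inter> cyc a q c r \<subseteq> sg c r \<union> sg r a"
    using i1 i2 i3 i4 va unfolding cyc_def by blast
qed

lemma vp_notin_cyc:
  assumes "u \<notin> {a, p, c, r}"
  shows "vertex_point u \<notin> cyc a p c r"
  using assms vp_sg_iff[of u a p] vp_sg_iff[of u p c] vp_sg_iff[of u c r] vp_sg_iff[of u r a]
  unfolding cyc_def by auto

context pl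
begin

lemma sep:
  assumes "adj K a p" "adj K p c" "adj K c r" "adj K r a" "\<not> adj K a c" "\<not> adj K p r" "a \<noteq> c" "p \<noteq> r"
  defines "J \<equiv> F ` cyc a p c r"
  shows "D \<inter> inside J = {} \<or> D \<inter> outside J = {}"
proof -
  have d: "a \<noteq> p" "a \<noteq> c" "a \<noteq> r" "p \<noteq> c" "p \<noteq> r" "c \<noteq> r"
    using assms(1-4,7,8) unfolding adj_def by auto
  have ind: "induced_4cycle K {a, p, c, r}"
    unfolding induced_4cycle_def
  proof
    show "{a, p, c, r} \<subseteq> verts K"
      using adj_verts[OF assms(1)] adj_verts[OF assms(2)] adj_verts[OF assms(3)] by simp
    show "\<exists>a' b c' d. {a, p, c, r} = {a', b, c', d} \<and> a' \<noteq> b \<and> a' \<noteq> c' \<and> a' \<noteq> d \<and> b \<noteq> c' \<and> b \<noteq> d \<and> c' \<noteq> d \<and>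
      adj K a' b \<and> adj K b c' \<and> adj K c' d \<and> adj K d a' \<and> \<not> adj K a' c' \<and> \<not> adj K b d"
      by (intro exI[of _ a] exI[of _ p] exI[of _ c] exI[of _ r]) (use assms(1-6) d in simp)
  qed
  have gc: "geom (full_sub K {a, p, c, r}) = cyc a p c r"
    using geom_cyc[OF sc assms(1-8)] .
  let ?Js = "h ` cyc a p c r"
  obtain W where W: "W \<in> components (sphere 0 1 - ?Js)" "h ` geom K \<inter> W = {}"
    using nss[of "{a, p, c, r}"] ind unfolding strongly_separates_def gc by blast
  have cg: "cyc a p c r \<subseteq> geom K" using cyc_geom[OF sc assms(1-4)] .
  have hc: "continuous_on (geom K) h" using emb unfolding sphere_embedding_def by simp
  have cJs: "compact ?Js"
    using compact_continuous_image[OF continuous_on_subset[OF hc cg] compact_cyc[OF d]] .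
  have Wsub: "W \<subseteq> sphere 0 1 - ?Js" using in_components_subset[OF W(1)] .
  have Wne: "W \<noteq> {}" using in_components_nonempty[OF W(1)] .
  have "\<exists>w\<in>W. w \<noteq> P"
  proof (rule ccontr)
    assume "\<not> (\<exists>w\<in>W. w \<noteq> P)"
    then have WP: "W = {P}" using Wne by auto
    have eq: "sphere 0 1 - ?Js = sphere 0 1 \<inter> (- ?Js)" by blast
    have o1: "openin (top_of_set (sphere 0 1)) (sphere 0 1 - ?Js)"
      unfolding eq using cJs by (intro openin_open_Int) (simp add: compact_imp_closed open_Compl)
    have lc: "locally connected (sphere 0 1 - ?Js)"
      using locally_open_subset[OF locally_connected_sphere o1] .
    have o2: "openin (top_of_set (sphere 0 1 - ?Js)) W"
      using openin_components_locally_connected[OF lc W(1)] .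
    have o3: "openin (top_of_set (sphere (0::real^3) 1)) {P}"
      using openin_trans[OF o2 o1] WP by simp
    have c3: "closedin (top_of_set (sphere (0::real^3) 1)) {P}"
      using P(1) by (intro closed_subset) auto
    have "connected (sphere (0::real^3) 1)" by (rule connected_sphere) simp
    then have "{P} = {} \<or> {P} = sphere (0::real^3) 1"
      using o3 c3 unfolding connected_clopen by blast
    then have "{P} = sphere (0::real^3) 1" by blast
    moreover have "- P \<in> sphere (0::real^3) 1" using P(1) by simp
    ultimately have "- P = P" by blast
    then have "P + P = 0" by (simp add: neg_eq_iff_add_eq_0)
    then have "(2::real) *\<^sub>R P = 0" by (simp add: scaleR_2)
    then have "P = 0" by simp
    then show False using P(1) by simp
  qed
  then obtain w where w: "w \<in> W" "w \<noteq> P" by blast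
  have wS: "w \<in> sphere 0 1 - {P}" "w \<notin> ?Js" using w Wsub by auto
  have Wcc: "W = connected_component_set (sphere 0 1 - ?Js) w"
    using W(1) w(1) by (metis components_iff connected_component_eq)
  have notJ: "\<phi> w \<notin> J"
  proof
    assume "\<phi> w \<in> J"
    then obtain x where x: "x \<in> cyc a p c r" "\<phi> w = F x" unfolding J_def by blast
    have "h x \<in> sphere 0 1 - {P}" using x(1) cg hsub by blast
    then have "w = h x" using x(2) psi_phi wS(1) unfolding F_def by (metis comp_apply)
    then show False using wS(2) x(1) by blast
  qed
  note JC = jordan_cyc[OF assms(1-4,7,8), folded J_def]
  have key: "D \<inter> U = {}" if U: "connected U" "U \<subseteq> - J" "\<phi> w \<in> U" for U
  proof -
    have c1: "connected (\<psi> ` U)"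
      using connected_continuous_image[OF continuous_on_subset[OF psi_cont] U(1)] by simp
    have s1: "\<psi> ` U \<subseteq> sphere 0 1 - ?Js"
    proof
      fix y assume "y \<in> \<psi> ` U"
      then obtain z where z: "z \<in> U" "y = \<psi> z" by blast
      have "y \<notin> ?Js"
      proof
        assume "y \<in> ?Js"
        then obtain x where x: "x \<in> cyc a p c r" "y = h x" by blast
        then have "z = F x" using z(2) phi_psi unfolding F_def by (metis comp_apply)
        then show False using x(1) z(1) U(2) unfolding J_def by blast
      qed
      then show "y \<in> sphere 0 1 - ?Js" using psi_in z(2) by blast
    qed
    have "w \<in> \<psi> ` U" using U(3) psi_phi[OF wS(1)] by (metis image_eqI)
    then have "\<psi> ` U \<subseteq> W" unfolding Wcc using c1 s1 by (rule connected_component_maximal)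
    show "D \<inter> U = {}"
    proof (rule ccontr)
      assume "D \<inter> U \<noteq> {}"
      then obtain x where x: "x \<in> geom K" "F x \<in> U" unfolding D_def by blast
      have "h x \<in> sphere 0 1 - {P}" using x(1) hsub by blast
      then have "\<psi> (F x) = h x" using psi_phi unfolding F_def by simp
      then have "h x \<in> W" using \<open>\<psi> ` U \<subseteq> W\<close> x(2) by (metis image_subset_iff)
      then show False using W(2) x(1) by blast
    qed
  qed
  have IO: "inside J \<union> outside J = - J" "connected (inside J)" "connected (outside J)"
    using JC by simp_all
  have s1: "inside J \<subseteq> - J" "outside J \<subseteq> - J" using IO(1) by blast+
  have "\<phi> w \<in> - J" using notJ by simp
  then have "\<phi> w \<in> inside J \<or> \<phi> w \<in> outside J" using IO(1) by blast
  then show ?thesis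
  proof
    assume "\<phi> w \<in> inside J" then show ?thesis using key[OF IO(2) s1(1)] by blast
  next
    assume "\<phi> w \<in> outside J" then show ?thesis using key[OF IO(3) s1(2)] by blast
  qed
qed

end

context pl
begin

lemma Ftri:
  assumes "{u, w, y} \<in> K" "u \<noteq> w" "u \<noteq> y" "w \<noteq> y"
  shows "compact (F ` tri u w y)" "connected (- (F ` tri u w y))" "tri u w y \<subseteq> geom K"
proof -
  let ?H = "convex hull {0, 1, \<i>::complex}"
  note T = tri_homeo[OF assms(2-4)]
  have tg: "tri u w y \<subseteq> geom K" using tri_geom[OF sc assms] .
  have Fc: "continuous_on (tri u w y) F" using continuous_on_subset[OF F_cont tg] .
  show "compact (F ` tri u w y)" using compact_continuous_image[OF Fc T(4)] .
  have cH: "compact ?H" by (simp add: compact_convex_hull)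
  have c1: "continuous_on ?H (F \<circ> trimap u w y)"
    using continuous_on_compose[OF T(1)] Fc T(3) by simp
  have i1: "inj_on (F \<circ> trimap u w y) ?H"
    using comp_inj_on[OF T(2)] inj_on_subset[OF F_inj tg] T(3) by simp
  have im: "(F \<circ> trimap u w y) ` ?H = F ` tri u w y"
    by (simp only: image_comp[symmetric] T(3))
  have "?H homeomorphic F ` tri u w y" using homeomorphic_compact[OF cH c1 im i1] .
  then have "F ` tri u w y homeomorphic ?H" by (rule iffD1[OF homeomorphic_sym])
  then show "connected (- (F ` tri u w y))"
    by (rule connected_complement_homeomorphic_convex_compact) (simp_all add: convex_convex_hull compact_convex_hull)
  show "tri u w y \<subseteq> geom K" using tg .
qed

lemma side:
  assumes "adj K a p" "adj K p c" "adj K c r" "adj K r a" "\<not> adj K a c" "a \<noteq> c" "p \<noteq> r"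
    and "u \<in> verts K" "v \<in> verts K" "u \<notin> {a, p, c, r}" "v \<notin> {a, p, c, r}"
  shows "connected_component (- (F ` cyc a p c r)) (F (vertex_point u)) (F (vertex_point v))"
proof -
  have d: "a \<noteq> p" "a \<noteq> c" "a \<noteq> r" "p \<noteq> c" "p \<noteq> r" "c \<noteq> r"
    using assms(1-4,6,7) unfolding adj_def by auto
  have cg: "cyc a p c r \<subseteq> geom K" using cyc_geom[OF sc assms(1-4)] .
  have ug: "vertex_point u \<in> geom K" "vertex_point v \<in> geom K" using vp_geom[OF sc] assms(8,9) by auto
  let ?J = "F ` cyc a p c r"
  have uJ: "F (vertex_point u) \<notin> ?J" "F (vertex_point v) \<notin> ?J"
    using F_notin[OF ug(1) cg vp_notin_cyc[OF assms(10)]] F_notin[OF ug(2) cg vp_notin_cyc[OF assms(11)]]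
    by auto
  show ?thesis
  proof (cases "adj K p r")
    case False
    have S: "D \<inter> inside ?J = {} \<or> D \<inter> outside ?J = {}" using sep[OF assms(1-5) False assms(6,7)] .
    note JC = jordan_cyc[OF assms(1-4,6,7)]
    have IO: "inside ?J \<union> outside ?J = - ?J" "connected (inside ?J)" "connected (outside ?J)"
      using JC by simp_all
    have s1: "inside ?J \<subseteq> - ?J" "outside ?J \<subseteq> - ?J" using IO(1) by blast+
    have uD: "F (vertex_point u) \<in> D" "F (vertex_point v) \<in> D" using D_vp assms(8,9) by auto
    have uIO: "F (vertex_point u) \<in> inside ?J \<union> outside ?J" "F (vertex_point v) \<in> inside ?J \<union> outside ?J"
      using uJ IO(1) by auto
    from S show ?thesis
    proof
      assume "D \<inter> inside ?J = {}"
      then have "F (vertex_point u) \<in> outside ?J" "F (vertex_point v) \<in> outside ?J" using uD uIO by blast+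
      then show ?thesis unfolding connected_component_def using IO(3) s1(2) by blast
    next
      assume "D \<inter> outside ?J = {}"
      then have "F (vertex_point u) \<in> inside ?J" "F (vertex_point v) \<in> inside ?J" using uD uIO by blast+
      then show ?thesis unfolding connected_component_def using IO(2) s1(1) by blast
    qed
  next
    case True
    have ar: "adj K a r" using assms(4) adj_sym by metis
    have cp: "adj K c p" using assms(2) adj_sym by metis
    have t1: "{a, p, r} \<in> K" using flag3[OF flag assms(1) True ar] .
    have t2: "{c, p, r} \<in> K" using flag3[OF flag cp True assms(3)] .
    note T1 = Ftri[OF t1 d(1) d(3) d(5)]
    note T2 = Ftri[OF t2 d(4)[symmetric] d(6) d(5)]
    let ?T1 = "F ` tri a p r" and ?T2 = "F ` tri c p r"
    have nt: "vertex_point u \<notin> tri a p r" "vertex_point v \<notin> tri a p r"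
      "vertex_point u \<notin> tri c p r" "vertex_point v \<notin> tri c p r"
      using assms(10,11) vp_tri[of u a p r] vp_tri[of v a p r] vp_tri[of u c p r] vp_tri[of v c p r] by auto
    have n1: "F (vertex_point u) \<notin> ?T1" "F (vertex_point v) \<notin> ?T1"
      using F_notin[OF ug(1) T1(3) nt(1)] F_notin[OF ug(2) T1(3) nt(2)] by auto
    have n2: "F (vertex_point u) \<notin> ?T2" "F (vertex_point v) \<notin> ?T2"
      using F_notin[OF ug(1) T2(3) nt(3)] F_notin[OF ug(2) T2(3) nt(4)] by auto
    have cc1: "connected_component (- ?T1) (F (vertex_point u)) (F (vertex_point v))"
      using T1(2) n1 connected_iff_connected_component by blast
    have cc2: "connected_component (- ?T2) (F (vertex_point u)) (F (vertex_point v))"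
      using T2(2) n2 connected_iff_connected_component by blast
    have int: "?T1 \<inter> ?T2 = F ` sg p r"
      using inj_on_image_Int[OF F_inj T1(3) T2(3)] tri_Int[OF d(2) d(1) d(3) d(4)[symmetric] d(6)] by simp
    have csg: "connected (sg p r)" using connected_path_image[OF path_sp[of p r]] path_image_sp[OF d(5)] by simp
    have sgg: "sg p r \<subseteq> T1tri" if "T1tri = tri a p r" for T1tri
      using sg_tri(2)[OF d(1) d(3) d(5)] that by simp
    have "connected (F ` sg p r)"
      using connected_continuous_image[OF continuous_on_subset[OF F_cont] csg] sgg[of "tri a p r"] T1(3) by auto
    then have "connected (?T1 \<inter> ?T2)" using int by simp
    then have "connected_component (- (?T1 \<union> ?T2)) (F (vertex_point u)) (F (vertex_point v))"
      using Janiszewski[OF T1(1) compact_imp_closed[OF T2(1)] _ cc1 cc2] by blast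
    moreover have "cyc a p c r \<subseteq> tri a p r \<union> tri c p r"
    proof -
      have "sg a p \<subseteq> tri a p r" "sg r a \<subseteq> tri a p r" using sg_tri[OF d(1) d(3) d(5)] sg_sym[of r a] by auto
      moreover have "sg p c \<subseteq> tri c p r" "sg c r \<subseteq> tri c p r" using sg_tri[OF d(4)[symmetric] d(6) d(5)] sg_sym[of p c] by auto
      ultimately show ?thesis unfolding cyc_def by blast
    qed
    then have "- (?T1 \<union> ?T2) \<subseteq> - ?J" by blast
    ultimately show ?thesis using connected_component_of_subset by blast
  qed
qed

lemma main:
  assumes "a \<noteq> c" "\<not> adj K a c" "adj K a p" "adj K p c" "adj K a q" "adj K q c"
    "adj K a r" "adj K r c" "p \<noteq> q" "p \<noteq> r" "q \<noteq> r" "\<not> adj K p q"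
    "f \<in> verts K" "f \<notin> {a, c, p, q, r}"
  shows False
proof -
  have cq: "adj K c q" using assms(6) adj_sym by metis
  have qa: "adj K q a" using assms(5) adj_sym by metis
  have cr: "adj K c r" using assms(8) adj_sym by metis
  have ra: "adj K r a" using assms(7) adj_sym by metis
  have d: "a \<noteq> p" "a \<noteq> q" "a \<noteq> r" "p \<noteq> c" "q \<noteq> c" "c \<noteq> r"
    using assms(3-8) unfolding adj_def by auto
  let ?Jpq = "F ` cyc a p c q" and ?Jpr = "F ` cyc a p c r" and ?Jqr = "F ` cyc a q c r"
  have g1: "cyc a p c q \<subseteq> geom K" using cyc_geom[OF sc assms(3,4) cq qa] .
  have g2: "cyc a p c r \<subseteq> geom K" using cyc_geom[OF sc assms(3,4) cr ra] .
  have g3: "cyc a q c r \<subseteq> geom K" using cyc_geom[OF sc assms(5,6) cr ra] .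
  have S: "D \<inter> inside ?Jpq = {} \<or> D \<inter> outside ?Jpq = {}"
    using sep[OF assms(3,4) cq qa assms(2,12,1,9)] .
  note JC = jordan_cyc[OF assms(3,4) cq qa assms(1,9)]
  have IO: "inside ?Jpq \<union> outside ?Jpq = - ?Jpq" "inside ?Jpq \<inter> outside ?Jpq = {}"
    "open (inside ?Jpq)" "open (outside ?Jpq)"
    using JC by simp_all
  obtain B B' where B: "D \<inter> B = {}" "B \<noteq> {}" "connected B" "frontier B = ?Jpq" "open B" "open B'"
    "B \<union> B' = - ?Jpq" "B \<inter> B' = {}"
  proof (cases "D \<inter> inside ?Jpq = {}")
    case True
    show ?thesis by (rule that[of "inside ?Jpq" "outside ?Jpq"]) (use True JC in simp_all)
  next
    case False
    then have "D \<inter> outside ?Jpq = {}" using S by blast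
    show ?thesis by (rule that[of "outside ?Jpq" "inside ?Jpq"]) (use \<open>D \<inter> outside ?Jpq = {}\<close> JC in \<open>simp_all add: Un_commute Int_commute\<close>)
  qed
  obtain y0 where y0: "y0 \<in> B" using B(2) by blast
  have DJ: "?Jpr \<subseteq> D" "?Jqr \<subseteq> D" using g2 g3 unfolding D_def by blast+
  have BJ: "B \<inter> ?Jpr = {}" "B \<inter> ?Jqr = {}" using B(1) DJ by blast+
  have clB: "?Jpq \<subseteq> closure B" using B(4) unfolding frontier_def by blast
  have vq: "vertex_point q \<in> cyc a p c q" using vp_in_sg(2)[of c q] d unfolding cyc_def by blast
  have vqg: "vertex_point q \<in> geom K" using vq g1 by blast
  have zq: "F (vertex_point q) \<notin> ?Jpr"
    using F_notin[OF vqg g2 vp_notin_cyc] assms d by auto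
  have cz1: "connected (insert (F (vertex_point q)) B)"
  proof (rule connected_intermediate_closure[OF B(3)])
    show "insert (F (vertex_point q)) B \<subseteq> closure B"
      using clB vq closure_subset[of B] by blast
  qed blast
  have "connected_component (- ?Jpr) y0 (F (vertex_point q))"
  proof -
    have "insert (F (vertex_point q)) B \<subseteq> - ?Jpr"
      using zq BJ(1) by (simp only: disjoint_eq_subset_Compl[symmetric] insert_disjoint simp_thms)
    then show ?thesis unfolding connected_component_def
      by (intro exI[of _ "insert (F (vertex_point q)) B"]) (use cz1 y0 in simp)
  qed
  moreover have "connected_component (- ?Jpr) (F (vertex_point q)) (F (vertex_point f))"
    using side[OF assms(3,4) cr ra assms(2,1,10) conjunct2[OF adj_verts[OF assms(5)]] assms(13)] assms d by auto
  ultimately have cc1: "connected_component (- ?Jpr) y0 (F (vertex_point f))"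
    by (rule connected_component_trans)
  have vp: "vertex_point p \<in> cyc a p c q" using vp_in_sg(2)[of a p] d unfolding cyc_def by blast
  have vpg: "vertex_point p \<in> geom K" using vp g1 by blast
  have zp: "F (vertex_point p) \<notin> ?Jqr"
    using F_notin[OF vpg g3 vp_notin_cyc] assms d by auto
  have cz2: "connected (insert (F (vertex_point p)) B)"
  proof (rule connected_intermediate_closure[OF B(3)])
    show "insert (F (vertex_point p)) B \<subseteq> closure B"
      using clB vp closure_subset[of B] by blast
  qed blast
  have "connected_component (- ?Jqr) y0 (F (vertex_point p))"
  proof -
    have "insert (F (vertex_point p)) B \<subseteq> - ?Jqr"
      using zp BJ(2) by (simp only: disjoint_eq_subset_Compl[symmetric] insert_disjoint simp_thms)
    then show ?thesis unfolding connected_component_def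
      by (intro exI[of _ "insert (F (vertex_point p)) B"]) (use cz2 y0 in simp)
  qed
  moreover have "connected_component (- ?Jqr) (F (vertex_point p)) (F (vertex_point f))"
    using side[OF assms(5,6) cr ra assms(2,1,11)[unfolded neq_commute] conjunct2[OF adj_verts[OF assms(3)]] assms(13)] assms d
    by auto
  ultimately have cc2: "connected_component (- ?Jqr) y0 (F (vertex_point f))"
    by (rule connected_component_trans)
  have cJ: "compact ?Jpr" "compact ?Jqr"
    using compact_Fcyc[OF assms(3,4) cr ra assms(1,10)] compact_Fcyc[OF assms(5,6) cr ra assms(1,11)] by auto
  have int: "?Jpr \<inter> ?Jqr = F ` (sg c r \<union> sg r a)"
    using inj_on_image_Int[OF F_inj g2 g3] cyc_Int[OF d(1,2) assms(1) d(3) assms(9) d(4) assms(10) d(5) assms(11) d(6)]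
    by simp
  have "connected (sg c r \<union> sg r a)"
  proof (rule connected_Un)
    show "connected (sg c r)" using connected_path_image[OF path_sp[of c r]] path_image_sp[OF d(6)] by simp
    show "connected (sg r a)" using connected_path_image[OF path_sp[of r a]] path_image_sp[of r a] d(3) by auto
    show "sg c r \<inter> sg r a \<noteq> {}" using vp_in_sg(2)[of c r] vp_in_sg(1)[of r a] d by blast
  qed
  moreover have "sg c r \<union> sg r a \<subseteq> geom K" using g2 unfolding cyc_def by blast
  ultimately have "connected (F ` (sg c r \<union> sg r a))"
    using connected_continuous_image continuous_on_subset[OF F_cont] by blast
  then have "connected (?Jpr \<inter> ?Jqr)" using int by simp
  then have "connected_component (- (?Jpr \<union> ?Jqr)) y0 (F (vertex_point f))"
    using Janiszewski[OF cJ(1) compact_imp_closed[OF cJ(2)] _ cc1 cc2] by blast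
  moreover have "cyc a p c q \<subseteq> cyc a p c r \<union> cyc a q c r"
    using sg_sym[of c q] sg_sym[of q a] unfolding cyc_def by blast
  then have "- (?Jpr \<union> ?Jqr) \<subseteq> - ?Jpq" by blast
  ultimately have "connected_component (- ?Jpq) y0 (F (vertex_point f))"
    using connected_component_of_subset by blast
  then have fin: "F (vertex_point f) \<in> connected_component_set (- ?Jpq) y0" by simp
  have y0J: "y0 \<in> - ?Jpq" using y0 B(7) by blast
  have "connected_component_set (- ?Jpq) y0 \<subseteq> B"
  proof (rule connected_in_one[where B = B'])
    show "connected (connected_component_set (- ?Jpq) y0)" by (rule connected_connected_component)
    show "connected_component_set (- ?Jpq) y0 \<subseteq> B \<union> B'"
      using connected_component_subset[of "- ?Jpq" y0] B(7) by simp
    show "y0 \<in> connected_component_set (- ?Jpq) y0"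
      using connected_component_refl[OF y0J] by simp
  qed (use B(5,6,8) y0 in auto)
  then have "F (vertex_point f) \<in> B" using fin by blast
  moreover have "F (vertex_point f) \<in> D" using D_vp assms(13) by blast
  ultimately show False using B(1) by blast
qed

end

lemma opp:
  assumes "induced_4cycle K S" "u \<in> S" "w \<in> S" "u \<noteq> w" "\<not> adj K u w"
  shows "\<exists>b d. S = {u, b, w, d} \<and> adj K u b \<and> adj K b w \<and> adj K u d \<and> adj K d w \<and>
     \<not> adj K b d \<and> b \<noteq> d \<and> u \<noteq> b \<and> u \<noteq> d \<and> w \<noteq> b \<and> w \<noteq> d"
proof -
  obtain a b c d where S: "S = {a, b, c, d}" "a \<noteq> b" "a \<noteq> c" "a \<noteq> d" "b \<noteq> c" "b \<noteq> d" "c \<noteq> d"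
    "adj K a b" "adj K b c" "adj K c d" "adj K d a" "\<not> adj K a c" "\<not> adj K b d"
    using assms(1) unfolding induced_4cycle_def by blast
  have s: "adj K b a" "adj K c b" "adj K d c" "adj K a d" "\<not> adj K c a" "\<not> adj K d b"
    using S(8-13) adj_sym by metis+
  have "(u = a \<and> w = c) \<or> (u = c \<and> w = a) \<or> (u = b \<and> w = d) \<or> (u = d \<and> w = b)"
    using assms(2-5) S s by auto
  then show ?thesis
  proof (elim disjE conjE)
    assume "u = a" "w = c" then show ?thesis
      by (intro exI[of _ b] exI[of _ d]) (use S s in auto)
  next
    assume "u = c" "w = a" then show ?thesis
      by (intro exI[of _ b] exI[of _ d]) (use S s in auto)
  next
    assume "u = b" "w = d" then show ?thesis
      by (intro exI[of _ a] exI[of _ c]) (use S s in auto)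
  next
    assume "u = d" "w = b" then show ?thesis
      by (intro exI[of _ a] exI[of _ c]) (use S s in auto)
  qed
qed

lemma three_in_cycle:
  assumes "induced_4cycle K S" "v \<in> S" "w \<in> S" "z \<in> S" "v \<noteq> w" "v \<noteq> z" "w \<noteq> z"
    "adj K v w" "adj K v z" "adj K w z"
  shows False
proof -
  obtain a b c d where S: "S = {a, b, c, d}" "a \<noteq> b" "a \<noteq> c" "a \<noteq> d" "b \<noteq> c" "b \<noteq> d" "c \<noteq> d"
    "adj K a b" "adj K b c" "adj K c d" "adj K d a" "\<not> adj K a c" "\<not> adj K b d"
    using assms(1) unfolding induced_4cycle_def by blast
  have s: "\<not> adj K c a" "\<not> adj K d b"
    using S(12-13) adj_sym by metis+
  show False using assms(2-10) S s by auto
qed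

lemma full_sub_single:
  assumes "simplicial_complex K" "v \<in> verts K"
  shows "full_sub K {v} = {{v}}"
proof -
  have "{v} \<in> K" using assms vp_geom unfolding geom_def vertex_point_def
    by (metis (no_types, lifting) empty_not_insert sc_closed singletonD subsetI verts_def UnionE)
  moreover have "\<And>s. s \<in> K \<Longrightarrow> s \<subseteq> {v} \<Longrightarrow> s = {v}"
    using assms(1) unfolding simplicial_complex_def by blast
  ultimately show ?thesis unfolding full_sub_def by blast
qed

lemma full_sub_edge:
  assumes "simplicial_complex K" "adj K v w"
  shows "full_sub K {v, w} = {{v}, {w}, {v, w}}"
proof -
  have e: "{v, w} \<in> K" using assms(2) unfolding adj_def by simp
  have "{v} \<in> K" "{w} \<in> K" using sc_closed[OF assms(1) e] by auto
  moreover have "\<And>s. s \<in> K \<Longrightarrow> s \<subseteq> {v, w} \<Longrightarrow> s = {v} \<or> s = {w} \<or> s = {v, w}"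
    using assms(1) unfolding simplicial_complex_def by blast
  ultimately show ?thesis using e unfolding full_sub_def by blast
qed

theorem lemma4p10:
  fixes K :: "'v set set" and h :: "('v \<Rightarrow> real) \<Rightarrow> real^3"
  assumes "flag_complex K" and "sphere_embedding K h"
    and "prime_complex K h" and "\<not> special_complex K"
    and "induced_4cycle K S1" and "induced_4cycle K S2" and "S1 \<noteq> S2"
    and "full_sub K S1 \<inter> full_sub K S2 \<noteq> {}"
  shows "(\<exists>v. full_sub K S1 \<inter> full_sub K S2 = {{v}}) \<or>
         (\<exists>u w. adj K u w \<and> full_sub K S1 \<inter> full_sub K S2 = {{u}, {w}, {u, w}})"
proof -
  have sc: "simplicial_complex K" using assms(1) unfolding flag_complex_def by simp
  have nss: "\<And>S. \<not> strongly_separates K h S" using assms(3) unfolding prime_complex_def by simp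
  obtain C where C: "C \<in> components (sphere 0 1 - h ` geom (full_sub K S1))" "h ` geom K \<inter> C = {}"
    using nss[of S1] assms(5) unfolding strongly_separates_def by blast
  obtain P where P: "P \<in> C" using in_components_nonempty[OF C(1)] by blast
  have PS: "P \<in> sphere 0 1" "P \<notin> h ` geom K" using P C in_components_subset[OF C(1)] by blast+
  have "sphere (0::real^3) 1 - {P} homeomorphic {x::real^3. axis 3 1 \<bullet> x = 0}"
    by (rule homeomorphic_punctured_sphere_hyperplane) (use PS in auto)
  moreover have "{x::real^3. axis 3 1 \<bullet> x = 0} homeomorphic (UNIV::complex set)"
    by (subst homeomorphic_affine_sets_eq) (auto simp: affine_hyperplane)
  ultimately have "sphere (0::real^3) 1 - {P} homeomorphic (UNIV::complex set)"
    by (rule homeomorphic_trans)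
  then obtain \<phi> \<psi> where hom: "homeomorphism (sphere 0 1 - {P}) (UNIV::complex set) \<phi> \<psi>"
    unfolding homeomorphic_def by blast
  interpret pl K h P \<phi> \<psi>
    by unfold_locales (use assms(1,2) nss PS hom in auto)
  let ?X = "S1 \<inter> S2"
  have fsI: "full_sub K S1 \<inter> full_sub K S2 = full_sub K ?X" unfolding full_sub_def by blast
  have Xne: "?X \<noteq> {}"
  proof -
    obtain s where "s \<in> K" "s \<subseteq> S1" "s \<subseteq> S2" using assms(8) unfolding full_sub_def by blast
    moreover have "s \<noteq> {}" using sc \<open>s \<in> K\<close> unfolding simplicial_complex_def by blast
    ultimately show ?thesis by blast
  qed
  have S1v: "S1 \<subseteq> verts K" using assms(5) unfolding induced_4cycle_def by blast
  show ?thesis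
  proof (cases "\<exists>u w. u \<in> ?X \<and> w \<in> ?X \<and> u \<noteq> w \<and> \<not> adj K u w")
    case True
    then obtain u w where uw: "u \<in> ?X" "w \<in> ?X" "u \<noteq> w" "\<not> adj K u w" by blast
    obtain b d where bd: "S1 = {u, b, w, d}" "adj K u b" "adj K b w" "adj K u d" "adj K d w"
      "\<not> adj K b d" "b \<noteq> d" "u \<noteq> b" "u \<noteq> d" "w \<noteq> b" "w \<noteq> d"
      using opp[OF assms(5)] uw by blast
    obtain x y where xy: "S2 = {u, x, w, y}" "adj K u x" "adj K x w" "adj K u y" "adj K y w"
      "\<not> adj K x y" "x \<noteq> y" "u \<noteq> x" "u \<noteq> y" "w \<noteq> x" "w \<noteq> y"
      using opp[OF assms(6)] uw by blast
    have "\<exists>r\<in>{x, y}. r \<notin> {b, d}"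
    proof (rule ccontr)
      assume "\<not> (\<exists>r\<in>{x, y}. r \<notin> {b, d})"
      then have "{x, y} = {b, d}" using xy(7) by auto
      then have "S1 = S2" using bd(1) xy(1) by auto
      then show False using assms(7) by simp
    qed
    then obtain r where r: "adj K u r" "adj K r w" "r \<noteq> u" "r \<noteq> w" "r \<noteq> b" "r \<noteq> d"
      using xy by blast
    have sub: "{u, w, b, d, r} \<subseteq> verts K"
      using adj_verts[OF bd(2)] adj_verts[OF bd(3)] adj_verts[OF bd(4)] adj_verts[OF r(1)] by simp
    have "verts K \<noteq> {b, d, r} \<union> {u, w}"
    proof
      assume V: "verts K = {b, d, r} \<union> {u, w}"
      have ws: "adj K w b" "adj K w d" "adj K w r" using bd(3) bd(5) r(2) adj_sym by metis+
      have nt: "\<not> (\<forall>z\<in>{b, d, r}. \<forall>y\<in>{b, d, r}. z \<noteq> y \<longrightarrow> adj K z y)"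
        using bd(6,7) by blast
      have "special_complex K"
        unfolding special_complex_def
        by (rule exI[of _ u], rule exI[of _ w], rule exI[of _ "{b, d, r}"])
          (use uw(3,4) bd r V ws nt in auto)
      then show False using assms(4) by simp
    qed
    then obtain f where f: "f \<in> verts K" "f \<notin> {u, w, b, d, r}" using sub by blast
    have False
      using main[OF uw(3,4) bd(2,3,4,5) r(1,2) bd(7) r(5)[symmetric] r(6)[symmetric] bd(6) f(1)] f(2) by auto
    then show ?thesis by simp
  next
    case False
    then have adjX: "\<And>u w. u \<in> ?X \<Longrightarrow> w \<in> ?X \<Longrightarrow> u \<noteq> w \<Longrightarrow> adj K u w" by blast
    obtain v where v: "v \<in> ?X" using Xne by blast
    show ?thesis
    proof (cases "?X = {v}")
      case True
      then show ?thesis using fsI full_sub_single[OF sc] v S1v by auto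
    next
      case False
      then obtain w where w: "w \<in> ?X" "w \<noteq> v" using v by blast
      have "?X = {v, w}"
      proof (rule ccontr)
        assume "?X \<noteq> {v, w}"
        then obtain z where z: "z \<in> ?X" "z \<noteq> v" "z \<noteq> w" using v w by blast
        show False
          using three_in_cycle[OF assms(5), of v w z] v w z adjX[of v w] adjX[of v z] adjX[of w z] by auto
      qed
      moreover have "adj K v w" using adjX[of v w] v w by auto
      ultimately show ?thesis using fsI full_sub_edge[OF sc] by auto
    qed
  qed
qed

end
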